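(* Let $d\ge2$ and let $p_1,\dots,p_{d+1}$ be the vertices of a regular $d$-simplex inscribed in the unit sphere centered at the origin of $\mathbb{R}^d$. For each $i$, let $q_i$ be the point on the ray from the origin through the circumcenter of the facet $[p_1,\dots,p_{i-1},p_{i+1},\dots,p_{d+1}]$ at distance $\rho$ from the origin, where $\rho>20d$. For each $i\in\{1,\dots,d+1\}$, let $a$ and $\rho'$ be the center and radius of the circumsphere of the $d$-simplex $[p_1,\dots,p_{i-1},q_i,p_{i+1},\dots,p_{d+1}]$. Then $\|a\|-\rho'>\frac{1}{10d}$. *)

theory Defs
  imports "HOL-Analysis.Analysis"
begin

text \<open>A (possibly lower-dimensional) sphere through all points of S, centered in the
  affine hull of S: c is the circumcenter and r the circumradius of S.\<close>
definition circumsphere :: "'a::euclidean_space set \<Rightarrow> 'a \<Rightarrow> real \<Rightarrow> bool" where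
  "circumsphere S c r \<longleftrightarrow> c \<in> affine hull S \<and> (\<forall>x\<in>S. dist c x = r)"

definition regular_simplex :: "(nat \<Rightarrow> 'a::euclidean_space) \<Rightarrow> nat \<Rightarrow> bool" where
  "regular_simplex p m \<longleftrightarrow> inj_on p {1..m+1} \<and> \<not> affine_dependent (p ` {1..m+1}) \<and>
     (\<exists>s. \<forall>i\<in>{1..m+1}. \<forall>j\<in>{1..m+1}. i \<noteq> j \<longrightarrow> dist (p i) (p j) = s)"

end

theory Submission
  imports Defs
begin

lemma scal:
  fixes D \<rho> t :: real
  assumes D: "D \<ge> 2" and r: "\<rho> > 20 * D" and t: "t = (1 - \<rho>^2) / (2 * (\<rho> - 1/D))"
  shows "t < 0" "\<rho> + t > 0" "t^2 + 2*t/D + 1 = (\<rho> + t)^2" "- t - (\<rho> + t) > 1 / (10 * D)"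
proof -
  have Dp: "D > 0" using D by simp
  have den: "\<rho> - 1/D > 0" using D r by (smt (verit) divide_le_eq_1_pos one_le_numeral)
  have tt: "t * (2 * (\<rho> - 1/D)) = 1 - \<rho>^2" using t den by simp
  have r1: "\<rho> > 1" using D r by linarith
  show "t < 0"
  proof (rule ccontr)
    assume "\<not> t < 0" then have "t * (2 * (\<rho> - 1/D)) \<ge> 0" using den by simp
    then show False using tt r1 by (smt (verit) one_less_power pos2)
  qed
  have "(\<rho> + t) * (2 * (\<rho> - 1/D)) = \<rho>^2 - 2*\<rho>/D + 1" using tt by (simp add: algebra_simps power2_eq_square add_divide_distrib diff_divide_distrib)
  moreover have "\<rho>^2 - 2*\<rho>/D + 1 > 0"
  proof -
    have "2*\<rho>/D \<le> \<rho>" using Dp D r1 by (simp add: field_simps)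
    moreover have "\<rho> \<le> \<rho>^2" using r1 by (simp add: power2_eq_square)
    ultimately show ?thesis by linarith
  qed
  ultimately show "\<rho> + t > 0" using den by (smt (verit) zero_less_mult_iff)
  show "t^2 + 2*t/D + 1 = (\<rho> + t)^2"
  proof -
    have "2*t/D + 1 = 2*t*\<rho> + \<rho>^2" using tt Dp by (simp add: field_simps power2_eq_square)
    then show ?thesis by (simp add: power2_eq_square algebra_simps)
  qed
  have "(- 2*t - \<rho>) * (\<rho> - 1/D) = \<rho>/D - 1" using tt by (simp add: algebra_simps power2_eq_square add_divide_distrib diff_divide_distrib)
  moreover have "(\<rho>/D - 1) > (\<rho> - 1/D) / (10*D)"
  proof -
    have h: "D*(D*(D*10)) < D*(D*(\<rho>*9))" using Dp r by (intro mult_strict_left_mono) auto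
    show ?thesis using Dp D r apply (simp add: field_simps) using h Dp by linarith
  qed
  ultimately have "(- 2*t - \<rho>) * (\<rho> - 1/D) > (1/(10*D)) * (\<rho> - 1/D)" by simp
  then show "- t - (\<rho> + t) > 1 / (10 * D)" using den by (smt (verit) mult_le_cancel_right)
qed

lemma center_unique:
  fixes a b :: "'a::euclidean_space"
  assumes "a \<in> affine hull S" "b \<in> affine hull S" "x0 \<in> S"
    "\<forall>x\<in>S. dist a x = r" "\<forall>x\<in>S. dist b x = r'"
  shows "b = a"
proof -
  define C where "C = (b - a) \<bullet> x0"
  have "S \<subseteq> {x. (b - a) \<bullet> x = C}"
  proof
    fix x assume x: "x \<in> S"
    have "norm (a - x) = norm (a - x0)" using assms x by (simp add: dist_norm)
    then have 1: "(a - x) \<bullet> (a - x) = (a - x0) \<bullet> (a - x0)" by (metis power2_norm_eq_inner)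
    have "norm (b - x) = norm (b - x0)" using assms x by (simp add: dist_norm)
    then have 2: "(b - x) \<bullet> (b - x) = (b - x0) \<bullet> (b - x0)" by (metis power2_norm_eq_inner)
    from 1 2 have "(b - a) \<bullet> x = C" unfolding C_def
      by (simp add: inner_diff_left inner_diff_right inner_commute)
    then show "x \<in> {x. (b - a) \<bullet> x = C}" by simp
  qed
  then have "affine hull S \<subseteq> {x. (b - a) \<bullet> x = C}"
    by (intro hull_minimal) (auto simp: affine_hyperplane)
  then have "(b - a) \<bullet> a = C" "(b - a) \<bullet> b = C" using assms by auto
  then have "(b - a) \<bullet> (b - a) = 0" by (simp add: inner_diff_right)
  then show ?thesis by simp
qed

theorem lemma3p18:
  fixes p q :: "nat \<Rightarrow> real ^ 'n" and \<rho> :: real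
  assumes "CARD('n) \<ge> 2"
    and "regular_simplex p CARD('n)"
    and "\<forall>i\<in>{1..CARD('n)+1}. norm (p i) = 1"
    and "\<rho> > 20 * real CARD('n)"
    and "\<forall>i\<in>{1..CARD('n)+1}. \<exists>c r. circumsphere (p ` ({1..CARD('n)+1} - {i})) c r
            \<and> c \<noteq> 0 \<and> q i = (\<rho> / norm c) *\<^sub>R c"
  shows "\<forall>i\<in>{1..CARD('n)+1}. \<exists>a \<rho>'.
           circumsphere (insert (q i) (p ` ({1..CARD('n)+1} - {i}))) a \<rho>'
         \<and> (\<forall>b r. circumsphere (insert (q i) (p ` ({1..CARD('n)+1} - {i}))) b r \<longrightarrow> b = a \<and> r = \<rho>')
         \<and> norm a - \<rho>' > 1 / (10 * real CARD('n))"
proof -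
  define d where "d = CARD('n)"
  define I where "I = {1..d+1}"
  define D where "D = real d"
  have d2: "d \<ge> 2" using assms(1) d_def by simp
  have D2: "D \<ge> 2" using d2 D_def by simp
  have inj: "inj_on p I" and indep: "\<not> affine_dependent (p ` I)"
    using assms(2) unfolding regular_simplex_def I_def d_def by auto
  obtain s where sd: "\<forall>i\<in>I. \<forall>j\<in>I. i \<noteq> j \<longrightarrow> dist (p i) (p j) = s"
    using assms(2) unfolding regular_simplex_def I_def d_def by auto
  have n1: "\<And>i. i \<in> I \<Longrightarrow> p i \<bullet> p i = 1"
    using assms(3) unfolding I_def d_def by (metis norm_eq_1)
  define g where "g = 1 - s^2/2"
  have pg: "p i \<bullet> p j = g" if "i \<in> I" "j \<in> I" "i \<noteq> j" for i j
  proof -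
    have "s^2 = (p i - p j) \<bullet> (p i - p j)" using sd that by (metis dist_norm power2_norm_eq_inner)
    also have "\<dots> = 2 - 2 * (p i \<bullet> p j)" using n1 that
      by (simp add: inner_diff_left inner_diff_right inner_commute)
    finally show ?thesis unfolding g_def by (simp add: field_simps)
  qed
  have finI: "finite I" unfolding I_def by simp
  have cardI: "card (I - {i}) = d" if "i \<in> I" for i using that finI unfolding I_def by simp
  define S where "S = sum p I"
  have Sp: "S \<bullet> p i = 1 + D * g" if i: "i \<in> I" for i
  proof -
    have "S \<bullet> p i = (\<Sum>j\<in>I. p j \<bullet> p i)" unfolding S_def by (simp add: inner_sum_left)
    also have "\<dots> = p i \<bullet> p i + (\<Sum>j\<in>I - {i}. p j \<bullet> p i)" using i finI by (simp add: sum.remove)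
    also have "(\<Sum>j\<in>I - {i}. p j \<bullet> p i) = (\<Sum>j\<in>I - {i}. g)"
      using pg i by (intro sum.cong) auto
    finally show ?thesis using n1 i cardI D_def by simp
  qed
  have S0: "S = 0"
  proof (rule ccontr)
    assume "S \<noteq> 0"
    have "p ` I \<subseteq> {x. S \<bullet> x = 1 + D * g}" using Sp by auto
    from independent_card_le_aff_dim[OF this indep]
    have "int (card (p ` I)) \<le> aff_dim {x. S \<bullet> x = 1 + D * g} + 1" .
    also have "\<dots> = int d" using aff_dim_hyperplane[OF \<open>S \<noteq> 0\<close>] d2 d_def by simp
    finally show False using card_image[OF inj] I_def by simp
  qed
  have gD: "g = - 1 / D"
  proof -
    have "1 \<in> I" unfolding I_def by simp
    then have "1 + D * g = 0" using Sp S0 by fastforce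
    then show ?thesis using D2 by (simp add: field_simps)
  qed
  have sumrest: "(\<Sum>j\<in>I - {i}. p j) = - p i" if "i \<in> I" for i
    using S0 that finI unfolding S_def by (simp add: sum.remove eq_neg_iff_add_eq_0 add.commute)
  show ?thesis
  proof (intro ballI)
    fix i assume iI0: "i \<in> {1..CARD('n)+1}"
    then have iI: "i \<in> I" using I_def d_def by simp
    have npi: "norm (p i) = 1" using assms(3) iI0 by blast
    define F where "F = p ` (I - {i})"
    have finF: "finite F" using finI F_def by simp
    have injF: "inj_on p (I - {i})" using inj by (rule inj_on_subset) auto
    have cardF: "card F = d" using card_image[OF injF] cardI[OF iI] F_def by simp
    obtain j0 where j0: "j0 \<in> I - {i}" using cardF cardI[OF iI] d2
      by (metis all_not_in_conv card.empty not_numeral_le_zero)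
    define c0 where "c0 = (- 1 / D) *\<^sub>R p i"
    have c0hull: "c0 \<in> affine hull F"
    proof -
      have "sum (\<lambda>_. 1 / D) F = 1" using cardF D2 D_def by simp
      moreover have "(\<Sum>v\<in>F. (1 / D) *\<^sub>R v) = c0"
      proof -
        have "(\<Sum>v\<in>F. (1 / D) *\<^sub>R v) = (1 / D) *\<^sub>R (\<Sum>v\<in>F. v)" by (rule scaleR_sum_right[symmetric])
        also have "(\<Sum>v\<in>F. v) = (\<Sum>j\<in>I - {i}. p j)" unfolding F_def using sum.reindex[OF injF, of "\<lambda>v. v"] by simp
        finally show ?thesis using sumrest[OF iI] c0_def by simp
      qed
      ultimately show ?thesis unfolding affine_hull_finite[OF finF] mem_Collect_eq by (intro exI[of _ "\<lambda>_. 1 / D"]) simp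
    qed
    have c0dist: "\<forall>x\<in>F. dist c0 x = sqrt (1 - 1 / D^2)"
    proof
      fix x assume "x \<in> F"
      then obtain j where j: "j \<in> I" "j \<noteq> i" "x = p j" unfolding F_def by auto
      have e: "p i \<bullet> p j = -1/D" "p j \<bullet> p i = -1/D" "p i \<bullet> p i = 1" "p j \<bullet> p j = 1"
        using n1 iI j pg[of i j] pg[of j i] gD by auto
      have "(c0 - x) \<bullet> (c0 - x) = 1 - 1/D^2" unfolding c0_def j(3)
        using D2 by (simp only: inner_diff_left inner_diff_right inner_scaleR_left inner_scaleR_right e) (simp add: field_simps power2_eq_square)
      then show "dist c0 x = sqrt (1 - 1 / D^2)" by (simp add: dist_norm norm_eq_sqrt_inner)
    qed
    obtain c r where cr: "circumsphere F c r" "c \<noteq> 0" "q i = (\<rho> / norm c) *\<^sub>R c"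
      using assms(5) iI0 F_def I_def d_def by blast
    have cF: "c \<in> affine hull F" "\<forall>x\<in>F. dist c x = r" using cr(1) unfolding circumsphere_def by auto
    have j0F: "p j0 \<in> F" using j0 unfolding F_def by blast
    have "c = c0" using center_unique[OF c0hull cF(1) j0F c0dist cF(2)] .
    have nc0: "norm c0 = 1 / D" unfolding c0_def using npi D2 by simp
    have qi: "q i = (- \<rho>) *\<^sub>R p i" using cr(3) \<open>c = c0\<close> nc0 D2 unfolding c0_def by simp
    define t where "t = (1 - \<rho>^2) / (2 * (\<rho> - 1/D))"
    have r20: "\<rho> > 20 * D" using assms(4) D_def d_def by simp
    note sc = scal[OF D2 r20 t_def]
    define a where "a = t *\<^sub>R p i"
    define T where "T = insert (q i) F"
    have ahull: "a \<in> affine hull T"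
    proof -
      have h1: "c0 \<in> affine hull T" using c0hull hull_mono[of F T] T_def by auto
      have h2: "q i \<in> affine hull T" using T_def by (simp add: hull_inc)
      define u where "u = (t + 1/D) / (1/D - \<rho>)"
      have den: "1/D - \<rho> \<noteq> 0" using D2 r20 by (smt (verit) divide_le_eq_1_pos)
      have uu: "u * (1/D - \<rho>) = t + 1/D" unfolding u_def using den by simp
      have "u * (- \<rho>) + (1 - u) * (- 1 / D) = t"
        using uu by (simp add: algebra_simps diff_divide_distrib; linarith?)
      moreover have "u *\<^sub>R q i + (1 - u) *\<^sub>R c0 = (u * (- \<rho>) + (1 - u) * (- 1 / D)) *\<^sub>R p i"
        unfolding qi c0_def by (simp only: scaleR_add_left scaleR_scaleR)
      ultimately have "u *\<^sub>R q i + (1 - u) *\<^sub>R c0 = a" unfolding a_def by simp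
      moreover have "u *\<^sub>R q i + (1 - u) *\<^sub>R c0 \<in> affine hull T"
        by (rule mem_affine[OF affine_affine_hull h2 h1]) simp
      ultimately show ?thesis by simp
    qed
    have adist: "\<forall>x\<in>T. dist a x = \<rho> + t"
    proof
      fix x assume "x \<in> T"
      then consider "x = q i" | j where "j \<in> I" "j \<noteq> i" "x = p j" unfolding T_def F_def by auto
      then show "dist a x = \<rho> + t"
      proof cases
        case 1
        have "a - x = (t + \<rho>) *\<^sub>R p i" unfolding 1 qi a_def by (simp add: algebra_simps)
        then show ?thesis using sc(2) npi by (simp add: dist_norm)
      next
        case (2 j)
        have e: "p i \<bullet> p j = -1/D" "p j \<bullet> p i = -1/D" "p i \<bullet> p i = 1" "p j \<bullet> p j = 1"
          using n1 iI 2 pg[of i j] pg[of j i] gD by auto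
        have "(a - x) \<bullet> (a - x) = t^2 + 2*t/D + 1" unfolding a_def 2(3)
          using D2 by (simp only: inner_diff_left inner_diff_right inner_scaleR_left inner_scaleR_right e) (simp add: field_simps power2_eq_square)
        also have "\<dots> = (\<rho> + t)^2" using sc(3) .
        finally show ?thesis using sc(2) by (simp add: dist_norm norm_eq_sqrt_inner)
      qed
    qed
    have "norm a = - t" unfolding a_def using sc(1) npi by simp
    show "\<exists>a \<rho>'. circumsphere (insert (q i) (p ` ({1..CARD('n)+1} - {i}))) a \<rho>'
         \<and> (\<forall>b r. circumsphere (insert (q i) (p ` ({1..CARD('n)+1} - {i}))) b r \<longrightarrow> b = a \<and> r = \<rho>')
         \<and> norm a - \<rho>' > 1 / (10 * real CARD('n))"
    proof (intro exI conjI allI impI)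
      have TT: "insert (q i) (p ` ({1..CARD('n)+1} - {i})) = T" unfolding T_def F_def I_def d_def by simp
      show "circumsphere (insert (q i) (p ` ({1..CARD('n)+1} - {i}))) a (\<rho> + t)"
        unfolding TT circumsphere_def using ahull adist by simp
      fix b r assume "circumsphere (insert (q i) (p ` ({1..CARD('n)+1} - {i}))) b r"
      then have b: "b \<in> affine hull T" "\<forall>x\<in>T. dist b x = r" unfolding TT circumsphere_def by auto
      show "b = a" by (rule center_unique[OF ahull b(1) insertI1[of "q i" F, folded T_def] adist b(2)])
      then show "r = \<rho> + t" using b(2) adist T_def by auto
    next
      show "norm a - (\<rho> + t) > 1 / (10 * real CARD('n))" using \<open>norm a = - t\<close> sc(4) D_def d_def by simp
    qed
  qed
qed

end
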